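(* Assume $f$ and all $g_i$ are $C^1$, and take $w_i$ to be the constant functions $w_i=\frac1{h_k}\int_{t_k}^{t_{k+1}}v_i(t)\,dt$ on $[t_k,t_{k+1}]$. Then \[ \|x(t_{k+1})-y(t_{k+1})\|\le h_k^2\left(\frac{(K+K')L'}{3}+2K'(L+L')\,\frac{e^{\Lambda h_k}-1}{\Lambda h_k}\right). \]
   Context: Setting: for $m\ge 1$ consider on $\mathbb{R}^n$ the input-affine system $\dot x(t)=f(x(t))+\sum_{i=1}^m g_i(x(t))v_i(t)$, where $f,g_i:\mathbb{R}^n\to\mathbb{R}^n$ and each $v_i$ is a Lebesgue measurable function with $|v_i(t)|\le V_i$ for some $V_i>0$. Fix a time step $[t_k,t_{k+1}]$ with $h_k=t_{k+1}-t_k>0$ and $t_{k+1/2}=(t_k+t_{k+1})/2$, and let $x$ be a solution on $[t_k,t_{k+1}]$. Given real-valued bounded measurable functions $w_i$ on $[t_k,t_{k+1}]$, let $y$ be the solution of the approximate system $\dot y(t)=f(y(t))+\sum_{i=1}^m g_i(y(t))w_i(t)$ with $y(t_k)=x(t_k)$. Norms: $\|x\|=\max_j|x_j|$ on $\mathbb{R}^n$, the induced matrix norm $\|Q\|=\max_k\sum_i|q_{ki}|$, and the logarithmic norm $\lambda(Q)=\max_k\big(q_{kk}+\sum_{i\neq k}|q_{ki}|\big)$. Standing bounds: there is a convex set $B$ containing $x(t)$ and $y(t)$ for all $t\in[t_k,t_{k+1}]$ on which $\|f\|\le K$, $\|g_i\|\le K_i$, $\|Df\|\le L$, $\|Dg_i\|\le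 L_i$, $\|D^2f\|\le H$, $\|D^2g_i\|\le H_i$ (whenever these derivatives exist; $D$ is the Jacobian, $D^2$ the second derivative) and $\lambda(Df)\le\Lambda$, with $\Lambda\neq 0$. Put $K'=\sum_{i=1}^m V_iK_i$, $L'=\sum_{i=1}^m V_iL_i$, $H'=\sum_{i=1}^m V_iH_i$. *)

theory Defs
  imports "HOL-Analysis.Analysis"
begin

definition maxnorm :: "real^'n \<Rightarrow> real" where
  "maxnorm x = Max (range (\<lambda>j. \<bar>x $ j\<bar>))"

text \<open>Induced matrix norm: maximal absolute row sum, Q $ k $ i = q_{ki}.\<close>
definition matnorm :: "real^'n^'n \<Rightarrow> real" where
  "matnorm Q = Max (range (\<lambda>k. \<Sum>i\<in>UNIV. \<bar>Q $ k $ i\<bar>))"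

definition lognorm :: "real^'n^'n \<Rightarrow> real" where
  "lognorm Q = Max (range (\<lambda>k. Q $ k $ k + (\<Sum>i\<in>UNIV - {k}. \<bar>Q $ k $ i\<bar>)))"

end

theory Submission
  imports Defs
begin


lemma maxnorm_ge: "\<bar>x $ j\<bar> \<le> maxnorm x"
  unfolding maxnorm_def by (rule Max_ge) auto

lemma maxnorm_le_iff: "maxnorm x \<le> c \<longleftrightarrow> (\<forall>j. \<bar>x $ j\<bar> \<le> c)"
  unfolding maxnorm_def by (subst Max_le_iff) auto

lemma maxnorm_nonneg: "0 \<le> maxnorm x"
  using maxnorm_ge[of x] abs_ge_zero order_trans by blast

lemma maxnorm_attained: "\<exists>j. maxnorm x = \<bar>x $ j\<bar>"
proof -
  have "maxnorm x \<in> range (\<lambda>j. \<bar>x $ j\<bar>)" unfolding maxnorm_def by (rule Max_in) auto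
  then show ?thesis by auto
qed

lemma maxnorm_leI: "(\<And>j. \<bar>x $ j\<bar> \<le> c) \<Longrightarrow> maxnorm x \<le> c"
  using maxnorm_le_iff by blast

lemma maxnorm_triangle: "maxnorm (x + y) \<le> maxnorm x + maxnorm y"
  by (rule maxnorm_leI) (smt (verit) maxnorm_ge vector_add_component)

lemma maxnorm_diff_triangle: "maxnorm (x - y) \<le> maxnorm x + maxnorm y"
  by (rule maxnorm_leI) (smt (verit) maxnorm_ge vector_minus_component)

lemma maxnorm_scale: "maxnorm (c *\<^sub>R x) = \<bar>c\<bar> * maxnorm x"
proof (rule antisym)
  show "maxnorm (c *\<^sub>R x) \<le> \<bar>c\<bar> * maxnorm x"
    by (rule maxnorm_leI) (simp add: abs_mult maxnorm_ge mult_left_mono)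
  obtain j where "maxnorm x = \<bar>x $ j\<bar>" using maxnorm_attained by blast
  then show "\<bar>c\<bar> * maxnorm x \<le> maxnorm (c *\<^sub>R x)"
    using maxnorm_ge[of "c *\<^sub>R x" j] by (simp add: abs_mult)
qed

lemma maxnorm_minus: "maxnorm (x - y) = maxnorm (y - x)"
  by (metis maxnorm_le_iff order_antisym abs_minus_commute vector_minus_component order_refl)

lemma maxnorm_zero[simp]: "maxnorm 0 = 0"
  by (metis maxnorm_le_iff maxnorm_nonneg order_antisym abs_zero zero_index order_refl)

lemma maxnorm_le_norm: "maxnorm x \<le> norm x"
  by (rule maxnorm_leI) (rule component_le_norm_cart)

lemma norm_le_maxnorm: "norm x \<le> real CARD('n) * maxnorm (x::real^'n)"
proof -
  have "norm x \<le> (\<Sum>i\<in>UNIV. \<bar>x $ i\<bar>)" by (rule norm_le_l1_cart)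
  also have "\<dots> \<le> (\<Sum>i\<in>(UNIV::'n set). maxnorm x)" by (rule sum_mono) (rule maxnorm_ge)
  finally show ?thesis by simp
qed

lemma maxnorm_sum: "finite I \<Longrightarrow> maxnorm (\<Sum>i\<in>I. F i) \<le> (\<Sum>i\<in>I. maxnorm (F i))"
  by (induction I rule: finite_induct) (auto intro: order_trans[OF maxnorm_triangle])

lemma maxnorm_continuous: "continuous_on S (F::real \<Rightarrow> real^'n) \<Longrightarrow> continuous_on S (\<lambda>t. maxnorm (F t))"
proof -
  have L: "\<bar>maxnorm a - maxnorm b\<bar> \<le> norm (a - b)" for a b :: "real^'n"
  proof -
    have "maxnorm a \<le> maxnorm b + maxnorm (a - b)" using maxnorm_triangle[of b "a-b"] by simp
    moreover have "maxnorm b \<le> maxnorm a + maxnorm (b - a)" using maxnorm_triangle[of a "b-a"] by simp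
    ultimately show ?thesis using maxnorm_le_norm[of "a-b"] maxnorm_minus[of a b] by linarith
  qed
  have "continuous_on UNIV (maxnorm :: real^'n \<Rightarrow> real)"
    unfolding continuous_on_iff
    by (metis L UNIV_I dist_norm real_norm_def order_le_less_trans)
  moreover assume "continuous_on S F"
  ultimately show ?thesis using continuous_on_compose2[of UNIV maxnorm S F] by auto
qed

lemma matnorm_row: "(\<Sum>i\<in>UNIV. \<bar>Q $ k $ i\<bar>) \<le> matnorm Q"
  unfolding matnorm_def by (rule Max_ge) auto

lemma lognorm_row: "Q $ k $ k + (\<Sum>i\<in>UNIV - {k}. \<bar>Q $ k $ i\<bar>) \<le> lognorm Q"
  unfolding lognorm_def by (rule Max_ge) auto





lemma row_mvt:
  fixes F :: "real^'n \<Rightarrow> real^'n" and DF :: "real^'n \<Rightarrow> real^'n^'n"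
  assumes der: "\<And>z. (F has_derivative (\<lambda>u. DF z *v u)) (at z)"
    and cvx: "convex B" and a: "a \<in> B" and b: "b \<in> B"
  shows "\<exists>\<xi>\<in>B. (F a - F b) $ k = (\<Sum>i\<in>UNIV. DF \<xi> $ k $ i * (a - b) $ i)"
proof -
  define d where "d = a - b"
  define \<phi> where "\<phi> s = F (b + s *\<^sub>R d) $ k" for s
  have D: "(\<phi> has_derivative (\<lambda>r. (DF (b + s *\<^sub>R d) *v (r *\<^sub>R d)) $ k)) (at s within {0..1})" for s
  proof -
    have 1: "((\<lambda>s. b + s *\<^sub>R d) has_derivative (\<lambda>r. r *\<^sub>R d)) (at s within {0..1})"
      by (auto intro!: derivative_eq_intros)
    have 2: "((\<lambda>s. F (b + s *\<^sub>R d)) has_derivative (\<lambda>r. DF (b + s *\<^sub>R d) *v (r *\<^sub>R d))) (at s within {0..1})"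
      using has_derivative_in_compose[OF 1, of F "\<lambda>u. DF (b + s *\<^sub>R d) *v u"] der
      by (simp add: has_derivative_at_withinI o_def)
    have 3: "bounded_linear (\<lambda>v::real^'n. v $ k)" by (rule bounded_linear_vec_nth)
    show ?thesis unfolding \<phi>_def
      using bounded_linear.has_derivative[OF 3 2] by simp
  qed
  obtain s where s: "s \<in> {0<..<1}" and eq: "\<phi> 1 - \<phi> 0 = (DF (b + s *\<^sub>R d) *v ((1 - 0) *\<^sub>R d)) $ k"
    using mvt_simple[of 0 1 \<phi>, OF _ D] by auto
  have "b + s *\<^sub>R d = (1 - s) *\<^sub>R b + s *\<^sub>R a" unfolding d_def by (simp add: algebra_simps)
  then have inB: "b + s *\<^sub>R d \<in> B" using cvx a b s convexD[of B b a "1-s" s] by auto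
  have "(F a - F b) $ k = \<phi> 1 - \<phi> 0" unfolding \<phi>_def d_def by simp
  also have "\<dots> = (\<Sum>i\<in>UNIV. DF (b + s *\<^sub>R d) $ k $ i * (a - b) $ i)"
    using eq by (simp add: matrix_vector_mult_def d_def)
  finally show ?thesis using inB by blast
qed

lemma lip_maxnorm:
  fixes F :: "real^'n \<Rightarrow> real^'n" and DF :: "real^'n \<Rightarrow> real^'n^'n"
  assumes der: "\<And>z. (F has_derivative (\<lambda>u. DF z *v u)) (at z)"
    and cvx: "convex B" and a: "a \<in> B" and b: "b \<in> B"
    and bd: "\<And>z. z \<in> B \<Longrightarrow> matnorm (DF z) \<le> M"
  shows "maxnorm (F a - F b) \<le> M * maxnorm (a - b)"
proof (rule maxnorm_leI)
  fix k
  obtain \<xi> where \<xi>: "\<xi> \<in> B" and eq: "(F a - F b) $ k = (\<Sum>i\<in>UNIV. DF \<xi> $ k $ i * (a - b) $ i)"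
    using row_mvt[OF der cvx a b] by blast
  have "\<bar>(F a - F b) $ k\<bar> \<le> (\<Sum>i\<in>UNIV. \<bar>DF \<xi> $ k $ i\<bar> * \<bar>(a - b) $ i\<bar>)"
    unfolding eq by (metis (no_types, lifting) abs_mult sum.cong sum_abs)
  also have "\<dots> \<le> (\<Sum>i\<in>UNIV. \<bar>DF \<xi> $ k $ i\<bar> * maxnorm (a - b))"
    by (rule sum_mono, rule mult_left_mono[OF maxnorm_ge]) simp
  also have "\<dots> = (\<Sum>i\<in>UNIV. \<bar>DF \<xi> $ k $ i\<bar>) * maxnorm (a - b)" by (simp add: sum_distrib_right)
  also have "\<dots> \<le> M * maxnorm (a - b)"
    using matnorm_row[of "DF \<xi>" k] bd[OF \<xi>] maxnorm_nonneg
    by (meson mult_right_mono order_trans)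
  finally show "\<bar>(F a - F b) $ k\<bar> \<le> M * maxnorm (a - b)" .
qed

lemma osl_maxnorm:
  fixes F :: "real^'n \<Rightarrow> real^'n" and DF :: "real^'n \<Rightarrow> real^'n^'n"
  assumes der: "\<And>z. (F has_derivative (\<lambda>u. DF z *v u)) (at z)"
    and cvx: "convex B" and a: "a \<in> B" and b: "b \<in> B"
    and bd: "\<And>z. z \<in> B \<Longrightarrow> matnorm (DF z) \<le> M"
    and lg: "\<And>z. z \<in> B \<Longrightarrow> lognorm (DF z) \<le> \<Lambda>"
    and \<delta>: "0 \<le> \<delta>" "\<delta> * M \<le> 1"
  shows "maxnorm (z + \<delta> *\<^sub>R (F a - F b)) \<le> (1 + \<delta> * \<Lambda>) * maxnorm z + \<delta> * M * maxnorm (a - b - z)"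
proof (rule maxnorm_leI)
  fix k
  obtain \<xi> where \<xi>: "\<xi> \<in> B" and eq: "(F a - F b) $ k = (\<Sum>i\<in>UNIV. DF \<xi> $ k $ i * (a - b) $ i)"
    using row_mvt[OF der cvx a b] by blast
  define q where "q i = DF \<xi> $ k $ i" for i
  define w where "w = a - b - z"
  have ab: "(a - b) $ i = z $ i + w $ i" for i unfolding w_def by simp
  have rs: "(\<Sum>i\<in>UNIV. \<bar>q i\<bar>) \<le> M" using matnorm_row[of "DF \<xi>" k] bd[OF \<xi>] unfolding q_def by simp
  have qk: "\<bar>q k\<bar> \<le> (\<Sum>i\<in>UNIV. \<bar>q i\<bar>)"
    by (rule member_le_sum) auto
  have pos: "0 \<le> 1 + \<delta> * q k"
  proof -
    have "\<delta> * \<bar>q k\<bar> \<le> \<delta> * M" using qk rs \<delta> by (meson mult_left_mono order_trans)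
    then have "\<delta> * \<bar>q k\<bar> \<le> 1" using \<delta> by linarith
    moreover have "- (\<delta> * \<bar>q k\<bar>) \<le> \<delta> * q k" using \<delta>(1) by (cases "q k \<ge> 0") simp_all
    ultimately show ?thesis by linarith
  qed
  have lr: "q k + (\<Sum>i\<in>UNIV - {k}. \<bar>q i\<bar>) \<le> \<Lambda>"
    using lognorm_row[of "DF \<xi>" k] lg[OF \<xi>] unfolding q_def by simp
  have split: "(\<Sum>i\<in>UNIV. q i * z $ i) = q k * z $ k + (\<Sum>i\<in>UNIV - {k}. q i * z $ i)"
    by (simp add: sum.remove)
  have comp: "(z + \<delta> *\<^sub>R (F a - F b)) $ k
      = (1 + \<delta> * q k) * z $ k + \<delta> * (\<Sum>i\<in>UNIV - {k}. q i * z $ i) + \<delta> * (\<Sum>i\<in>UNIV. q i * w $ i)"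
    using eq split unfolding q_def[symmetric] ab
    by (simp add: distrib_left sum.distrib algebra_simps)
  have t1: "\<bar>(1 + \<delta> * q k) * z $ k\<bar> \<le> (1 + \<delta> * q k) * maxnorm z"
    using pos by (simp add: abs_mult maxnorm_ge mult_left_mono)
  have t2: "\<bar>(\<Sum>i\<in>UNIV - {k}. q i * z $ i)\<bar> \<le> (\<Sum>i\<in>UNIV - {k}. \<bar>q i\<bar>) * maxnorm z"
  proof -
    have "\<bar>(\<Sum>i\<in>UNIV - {k}. q i * z $ i)\<bar> \<le> (\<Sum>i\<in>UNIV - {k}. \<bar>q i\<bar> * \<bar>z $ i\<bar>)"
      by (metis (no_types, lifting) abs_mult sum.cong sum_abs)
    also have "\<dots> \<le> (\<Sum>i\<in>UNIV - {k}. \<bar>q i\<bar> * maxnorm z)"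
      by (rule sum_mono, rule mult_left_mono[OF maxnorm_ge]) simp
    finally show ?thesis by (simp add: sum_distrib_right)
  qed
  have t3: "\<bar>(\<Sum>i\<in>UNIV. q i * w $ i)\<bar> \<le> M * maxnorm w"
  proof -
    have "\<bar>(\<Sum>i\<in>UNIV. q i * w $ i)\<bar> \<le> (\<Sum>i\<in>UNIV. \<bar>q i\<bar> * \<bar>w $ i\<bar>)"
      by (metis (no_types, lifting) abs_mult sum.cong sum_abs)
    also have "\<dots> \<le> (\<Sum>i\<in>UNIV. \<bar>q i\<bar> * maxnorm w)"
      by (rule sum_mono, rule mult_left_mono[OF maxnorm_ge]) simp
    also have "\<dots> = (\<Sum>i\<in>UNIV. \<bar>q i\<bar>) * maxnorm w" by (simp add: sum_distrib_right)
    also have "\<dots> \<le> M * maxnorm w" using rs maxnorm_nonneg[of w] by (rule mult_right_mono)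
    finally show ?thesis .
  qed
  have "\<bar>(z + \<delta> *\<^sub>R (F a - F b)) $ k\<bar> \<le> (1 + \<delta> * q k) * maxnorm z
      + \<delta> * ((\<Sum>i\<in>UNIV - {k}. \<bar>q i\<bar>) * maxnorm z) + \<delta> * (M * maxnorm w)"
  proof -
    have a2: "\<bar>\<delta> * (\<Sum>i\<in>UNIV - {k}. q i * z $ i)\<bar> \<le> \<delta> * ((\<Sum>i\<in>UNIV - {k}. \<bar>q i\<bar>) * maxnorm z)"
      unfolding abs_mult using t2 \<delta>(1) by (simp add: mult_left_mono)
    have a3: "\<bar>\<delta> * (\<Sum>i\<in>UNIV. q i * w $ i)\<bar> \<le> \<delta> * (M * maxnorm w)"
      unfolding abs_mult using t3 \<delta>(1) by (simp add: mult_left_mono)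
    show ?thesis unfolding comp using t1 a2 a3 by linarith
  qed
  also have "\<dots> = (1 + \<delta> * (q k + (\<Sum>i\<in>UNIV - {k}. \<bar>q i\<bar>))) * maxnorm z + \<delta> * M * maxnorm w"
    by (simp add: algebra_simps)
  also have "\<dots> \<le> (1 + \<delta> * \<Lambda>) * maxnorm z + \<delta> * M * maxnorm w"
    using lr \<delta>(1) maxnorm_nonneg[of z] by (intro add_right_mono mult_right_mono add_left_mono mult_left_mono) auto
  finally show "\<bar>(z + \<delta> *\<^sub>R (F a - F b)) $ k\<bar> \<le> (1 + \<delta> * \<Lambda>) * maxnorm z + \<delta> * M * maxnorm (a - b - z)"
    unfolding w_def .
qed




lemma has_integral_maxnorm_bound:
  fixes F :: "real \<Rightarrow> real^'n"
  assumes "(F has_integral I) {a..b}" "a \<le> b" "0 \<le> M" "\<And>s. s \<in> {a..b} \<Longrightarrow> maxnorm (F s) \<le> M"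
  shows "maxnorm I \<le> M * (b - a)"
proof (rule maxnorm_leI)
  fix j
  have "((\<lambda>v. v $ j) \<circ> F has_integral I $ j) {a..b}"
    by (rule has_integral_linear[OF assms(1) bounded_linear_vec_nth])
  then have "norm (I $ j) \<le> M * Henstock_Kurzweil_Integration.content {a..b}"
  proof (rule has_integral_bound_real[OF assms(3) finite.emptyI])
    fix s assume "s \<in> {a..b} - {}"
    then show "norm (((\<lambda>v. v $ j) \<circ> F) s) \<le> M" using order_trans[OF maxnorm_ge assms(4)] by simp
  qed
  then show "\<bar>I $ j\<bar> \<le> M * (b - a)" using assms(2) by simp
qed

lemma has_integral_sub_interval:
  fixes F :: "real \<Rightarrow> 'b::banach"
  assumes "(F has_integral A) {a..c}" "(F has_integral B) {a..b}" "a \<le> b" "b \<le> c"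
  shows "(F has_integral (A - B)) {b..c}"
proof -
  have "F integrable_on {b..c}"
    using integrable_on_subinterval[of F "{a..c}" b c] assms by (auto intro: has_integral_integrable)
  then have "(F has_integral integral {b..c} F) {b..c}" by auto
  moreover have "integral {b..c} F = A - B"
    using has_integral_combine[OF assms(3,4) assms(2) \<open>(F has_integral integral {b..c} F) {b..c}\<close>] assms(1)
    has_integral_unique by (metis add_diff_cancel_left')
  ultimately show ?thesis by simp
qed

lemma comparison:
  fixes N \<psi> \<psi>' \<beta> :: "real \<Rightarrow> real"
  assumes ac: "a \<le> c" and Nc: "continuous_on {a..c} N"
    and \<psi>d: "\<And>t. t \<in> {a..c} \<Longrightarrow> (\<psi> has_real_derivative \<psi>' t) (at t within {a..c})"
    and \<psi>ge: "\<And>t. t \<in> {a..c} \<Longrightarrow> \<Lambda> * \<psi> t + \<beta> t \<le> \<psi>' t"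
    and init: "N a \<le> \<psi> a"
    and dini: "\<And>t \<epsilon>. t \<in> {a..<c} \<Longrightarrow> \<epsilon> > 0 \<Longrightarrow> \<exists>\<eta>>0. \<forall>\<delta>. 0 < \<delta> \<longrightarrow> \<delta> < \<eta> \<longrightarrow> t + \<delta> \<le> c \<longrightarrow>
                 N (t + \<delta>) \<le> N t + \<delta> * (\<Lambda> * N t + \<beta> t + \<epsilon>)"
    and t1: "t1 \<in> {a..c}"
  shows "N t1 \<le> \<psi> t1"
proof (rule ccontr)
  assume "\<not> N t1 \<le> \<psi> t1"
  then have pos: "N t1 - \<psi> t1 > 0" by simp
  define k where "k = \<bar>\<Lambda>\<bar> + 1"
  define \<epsilon> where "\<epsilon> = (N t1 - \<psi> t1) / (2 * exp (k * (t1 - a)))"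
  have \<epsilon>pos: "\<epsilon> > 0" unfolding \<epsilon>_def using pos by simp
  define \<theta> where "\<theta> t = \<epsilon> * exp (k * (t - a))" for t
  define G where "G t = N t - \<psi> t - \<theta> t" for t
  have \<theta>t1: "\<theta> t1 = (N t1 - \<psi> t1) / 2" unfolding \<theta>_def \<epsilon>_def by simp
  have Gt1: "G t1 > 0" unfolding G_def using \<theta>t1 pos by simp
  have \<psi>c: "continuous_on {a..c} \<psi>" using \<psi>d by (rule DERIV_continuous_on)
  have Gc: "continuous_on {a..c} G" unfolding G_def \<theta>_def
    by (intro continuous_intros Nc \<psi>c)
  have Ga: "G a < 0" unfolding G_def \<theta>_def using init \<epsilon>pos by simp
  define S where "S = {a..t1} \<inter> G -` {..0}"
  have Gc1: "continuous_on {a..t1} G" by (rule continuous_on_subset[OF Gc]) (use t1 in auto)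
  have Scl: "closed S" unfolding S_def by (rule continuous_closed_preimage[OF Gc1]) auto
  have aS: "a \<in> S" unfolding S_def using Ga t1 by auto
  have Sbd: "bdd_above S" unfolding S_def by (rule bdd_aboveI[of _ t1]) auto
  define t0 where "t0 = Sup S"
  have t0S: "t0 \<in> S" unfolding t0_def using closed_contains_Sup[OF _ Sbd Scl] aS by blast
  have t0ge: "\<And>t. t \<in> S \<Longrightarrow> t \<le> t0" unfolding t0_def using Sbd by (simp add: cSup_upper)
  have t0a: "a \<le> t0" "t0 \<le> t1" "G t0 \<le> 0" using t0S unfolding S_def by auto
  have t0lt: "t0 < t1" using t0a Gt1 by (metis order_less_le not_le)
  have Gpos: "\<And>t. t0 < t \<Longrightarrow> t \<le> t1 \<Longrightarrow> G t > 0"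
  proof (rule ccontr)
    fix t assume "t0 < t" "t \<le> t1" "\<not> G t > 0"
    then have "t \<in> S" unfolding S_def using t0a by auto
    then show False using t0ge \<open>t0 < t\<close> by fastforce
  qed
  have G0: "G t0 = 0"
  proof (rule ccontr)
    assume "G t0 \<noteq> 0"
    then have neg: "G t0 < 0" using t0a by simp
    have "continuous (at t0 within {a..c}) G" using Gc t0a t1
      by (simp add: continuous_on_eq_continuous_within)
    then obtain d where d: "d > 0" "\<And>s. s \<in> {a..c} \<Longrightarrow> dist s t0 < d \<Longrightarrow> dist (G s) (G t0) < - G t0"
      unfolding continuous_within_eps_delta using neg by (metis neg_0_less_iff_less)
    define s where "s = min (t0 + d/2) t1"
    have "s \<in> {a..c}" "dist s t0 < d" "t0 < s" "s \<le> t1" unfolding s_def using d t0a t0lt t1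
      by (auto simp: dist_real_def)
    then have "G s < 0" using d(2) by (smt (verit) dist_real_def)
    then show False using Gpos \<open>t0 < s\<close> \<open>s \<le> t1\<close> by fastforce
  qed
  define e' where "e' = \<epsilon> / 4"
  have e'pos: "e' > 0" unfolding e'_def using \<epsilon>pos by simp
  have t0in: "t0 \<in> {a..<c}" using t0a t0lt t1 by auto
  obtain \<eta>1 where \<eta>1: "\<eta>1 > 0" "\<And>\<delta>. 0 < \<delta> \<Longrightarrow> \<delta> < \<eta>1 \<Longrightarrow> t0 + \<delta> \<le> c \<Longrightarrow>
                 N (t0 + \<delta>) \<le> N t0 + \<delta> * (\<Lambda> * N t0 + \<beta> t0 + e')"
    using dini[OF t0in e'pos] by blast
  have "(\<psi> has_derivative (\<lambda>h. h * \<psi>' t0)) (at t0 within {a..c})"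
    using \<psi>d[of t0] t0in unfolding has_field_derivative_def by (subst mult.commute) auto
  then obtain \<eta>2 where \<eta>2: "\<eta>2 > 0" "\<And>y. y \<in> {a..c} \<Longrightarrow> norm (y - t0) < \<eta>2 \<Longrightarrow>
        norm (\<psi> y - \<psi> t0 - (y - t0) * \<psi>' t0) \<le> e' * norm (y - t0)"
    unfolding has_derivative_within_alt using e'pos by blast
  define \<delta> where "\<delta> = min (min \<eta>1 \<eta>2) (t1 - t0) / 2"
  have \<delta>: "0 < \<delta>" "\<delta> < \<eta>1" "\<delta> < \<eta>2" "t0 + \<delta> \<le> t1"
  proof -
    have "min (min \<eta>1 \<eta>2) (t1 - t0) \<le> t1 - t0" "min (min \<eta>1 \<eta>2) (t1 - t0) \<le> \<eta>1"
         "min (min \<eta>1 \<eta>2) (t1 - t0) \<le> \<eta>2" "min (min \<eta>1 \<eta>2) (t1 - t0) > 0"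
      using \<eta>1(1) \<eta>2(1) t0lt by auto
    then show "0 < \<delta>" "\<delta> < \<eta>1" "\<delta> < \<eta>2" "t0 + \<delta> \<le> t1" unfolding \<delta>_def by linarith+
  qed
  have ineqN: "N (t0 + \<delta>) \<le> N t0 + \<delta> * (\<Lambda> * N t0 + \<beta> t0 + e')"
    using \<eta>1(2)[OF \<delta>(1,2)] \<delta>(4) t1 by auto
  have "\<bar>\<psi> (t0 + \<delta>) - \<psi> t0 - \<delta> * \<psi>' t0\<bar> \<le> e' * \<delta>"
    using \<eta>2(2)[of "t0 + \<delta>"] \<delta> t0a t1 by auto
  then have ineq\<psi>: "\<psi> (t0 + \<delta>) \<ge> \<psi> t0 + \<delta> * \<psi>' t0 - e' * \<delta>" by linarith
  have "exp (k * (t0 + \<delta> - a)) = exp (k * (t0 - a)) * exp (k * \<delta>)"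
    by (simp add: exp_add[symmetric] algebra_simps)
  moreover have "exp (k * \<delta>) \<ge> 1 + k * \<delta>" by (rule exp_ge_add_one_self)
  ultimately have "\<theta> (t0 + \<delta>) \<ge> \<theta> t0 * (1 + k * \<delta>)" unfolding \<theta>_def
    using \<epsilon>pos by (simp add: mult_left_mono)
  then have ineq\<theta>: "\<theta> (t0 + \<delta>) \<ge> \<theta> t0 + \<delta> * (k * \<theta> t0)" by (simp add: algebra_simps)
  have \<theta>ge: "\<theta> t0 \<ge> \<epsilon>" unfolding \<theta>_def using \<epsilon>pos t0a k_def by simp
  have \<psi>'ge: "\<Lambda> * \<psi> t0 + \<beta> t0 \<le> \<psi>' t0" using \<psi>ge t0in by auto
  have Nt0: "N t0 = \<psi> t0 + \<theta> t0" using G0 unfolding G_def by simp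
  have "G (t0 + \<delta>) \<le> \<delta> * (\<Lambda> * N t0 + \<beta> t0 + e') - \<delta> * \<psi>' t0 + e' * \<delta> - \<delta> * (k * \<theta> t0)"
    using ineqN ineq\<psi> ineq\<theta> Nt0 unfolding G_def by linarith
  also have "\<dots> = \<delta> * (\<Lambda> * \<theta> t0 + (\<Lambda> * \<psi> t0 + \<beta> t0 - \<psi>' t0) + 2 * e' - k * \<theta> t0)"
    unfolding Nt0 by (simp add: algebra_simps)
  also have "\<dots> \<le> \<delta> * (\<Lambda> * \<theta> t0 + 2 * e' - k * \<theta> t0)"
    using \<psi>'ge \<delta>(1) by (intro mult_left_mono) auto
  also have "\<dots> \<le> \<delta> * (- \<epsilon> / 2)"
  proof (intro mult_left_mono)
    have "\<Lambda> * \<theta> t0 \<le> \<bar>\<Lambda>\<bar> * \<theta> t0" using \<theta>ge \<epsilon>pos by (intro mult_right_mono) auto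
    then show "\<Lambda> * \<theta> t0 + 2 * e' - k * \<theta> t0 \<le> - \<epsilon> / 2"
      unfolding k_def e'_def using \<theta>ge by (simp add: algebra_simps)
  qed (use \<delta> in auto)
  also have "\<dots> < 0" using \<delta>(1) \<epsilon>pos by (simp add: mult_pos_neg)
  finally show False using Gpos[of "t0 + \<delta>"] \<delta> by auto
qed




lemma sum_jN: "(\<Sum>j<N. (real j + 1) * (c - (real j + 1))) = c * real N * (real N + 1) / 2 - real N * (real N + 1) * (2 * real N + 1) / 6"
proof (induction N)
  case (Suc N)
  show ?case unfolding sum.lessThan_Suc Suc.IH by (simp add: field_simps)
qed simp

lemma abel_sum:
  fixes g p :: "nat \<Rightarrow> real"
  shows "(\<Sum>j<N. g (Suc j) * (p (Suc j) - p j)) = (\<Sum>j<N. p (Suc j) * (g (Suc j) - g (Suc (Suc j)))) + p N * g (Suc N) - p 0 * g 1"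
proof (induction N)
  case (Suc N)
  have gen: "\<And>S::real. S + p N * g (Suc N) - p 0 * g 1 + g (Suc N) * (p (Suc N) - p N)
     = S + p (Suc N) * (g (Suc N) - g (Suc (Suc N))) + p (Suc N) * g (Suc (Suc N)) - p 0 * g 1"
    by (simp add: algebra_simps)
  show ?case unfolding sum.lessThan_Suc Suc.IH by (rule gen)
qed simp

lemma archimedes_le:
  fixes x c d :: real
  assumes "\<And>N. N \<ge> 1 \<Longrightarrow> x \<le> c + d / real N"
  shows "x \<le> c"
proof (rule ccontr)
  assume "\<not> x \<le> c"
  then have pos: "x - c > 0" by simp
  obtain N :: nat where N: "real N > \<bar>d\<bar> / (x - c)" using reals_Archimedean2 by blast
  define M where "M = N + 1"
  have M1: "M \<ge> 1" and MN: "real M > \<bar>d\<bar> / (x - c)" unfolding M_def using N by auto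
  have Mpos: "real M > 0" using M1 by simp
  have "\<bar>d\<bar> < (x - c) * real M" using MN pos by (simp add: field_simps)
  then have "\<bar>d\<bar> / real M < x - c" using Mpos by (simp add: field_simps)
  moreover have "d / real M \<le> \<bar>d\<bar> / real M" using Mpos by (simp add: divide_right_mono)
  ultimately show False using assms[OF M1] by linarith
qed

lemma integral_sub:
  fixes f :: "real \<Rightarrow> real"
  assumes "f integrable_on {a..b}" "a \<le> p" "p \<le> q" "q \<le> b"
  shows "integral {p..q} f = integral {a..q} f - integral {a..p} f"
proof -
  have "f integrable_on {a..q}" using integrable_on_subinterval[of f "{a..b}" a q] assms by auto
  from Henstock_Kurzweil_Integration.integral_combine[OF assms(2,3) this] show ?thesis by simp
qed

lemma scalar_avg:
  fixes v G :: "real \<Rightarrow> real"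
  assumes ab: "a < b" and vi: "v integrable_on {a..b}" and Gc: "continuous_on {a..b} G"
    and vGi: "(\<lambda>s. v s * G s) integrable_on {a..b}"
    and vb: "\<And>s. s \<in> {a..b} \<Longrightarrow> \<bar>v s\<bar> \<le> V"
    and Gl: "\<And>s s'. s \<in> {a..b} \<Longrightarrow> s' \<in> {a..b} \<Longrightarrow> \<bar>G s - G s'\<bar> \<le> lc * \<bar>s - s'\<bar>"
    and l0: "0 \<le> lc"
  shows "\<bar>integral {a..b} (\<lambda>s. (v s - integral {a..b} v / (b - a)) * G s)\<bar> \<le> V * lc * (b - a)^2 / 3"
proof -
  define h where "h = b - a"
  define W where "W = integral {a..b} v / (b - a)"
  have hpos: "h > 0" unfolding h_def using ab by simp
  have V0: "0 \<le> V" using vb[of a] ab by auto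
  have Gi: "G integrable_on {a..b}" using Gc by (rule integrable_continuous_interval)
  have sub: "f integrable_on {p..q}" if "f integrable_on {a..b}" "a \<le> p" "q \<le> b" for f :: "real \<Rightarrow> real" and p q
    using integrable_on_subinterval[of f "{a..b}" p q] that by auto
  have Ivb: "\<bar>integral {p..q} v\<bar> \<le> V * (q - p)" if "a \<le> p" "p \<le> q" "q \<le> b" for p q
  proof -
    have "(v has_integral integral {p..q} v) {p..q}" using sub[OF vi that(1,3)] by auto
    then have "norm (integral {p..q} v) \<le> V * Henstock_Kurzweil_Integration.content {p..q}"
      by (rule has_integral_bound_real[OF V0 finite.emptyI]) (use vb that in auto)
    then show ?thesis using that by simp
  qed
  have Wb: "\<bar>W\<bar> \<le> V"
    using Ivb[of a b] ab unfolding W_def by (simp add: abs_div divide_le_eq)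
  define \<Phi> where "\<Phi> t = integral {a..t} v - (t - a) * W" for t
  have \<Phi>a: "\<Phi> a = 0" unfolding \<Phi>_def by simp
  have \<Phi>b: "\<Phi> b = 0" unfolding \<Phi>_def W_def using ab by simp
  have \<Phi>bd: "\<bar>\<Phi> t\<bar> \<le> 2 * V * (t - a) * (b - t) / h" if "a \<le> t" "t \<le> b" for t
  proof -
    have split: "integral {a..b} v = integral {a..t} v + integral {t..b} v"
      using Henstock_Kurzweil_Integration.integral_combine[OF that vi] by simp
    have eq: "\<Phi> t = ((b - t) * integral {a..t} v - (t - a) * integral {t..b} v) / h"
      unfolding \<Phi>_def W_def split h_def using ab by (simp add: field_simps)
    have "\<bar>(b - t) * integral {a..t} v - (t - a) * integral {t..b} v\<bar>
        \<le> (b - t) * (V * (t - a)) + (t - a) * (V * (b - t))"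
    proof -
      have "\<bar>(b - t) * integral {a..t} v\<bar> \<le> (b - t) * (V * (t - a))"
        using Ivb[of a t] that by (simp add: abs_mult mult_left_mono)
      moreover have "\<bar>(t - a) * integral {t..b} v\<bar> \<le> (t - a) * (V * (b - t))"
        using Ivb[of t b] that by (simp add: abs_mult mult_left_mono)
      ultimately show ?thesis by linarith
    qed
    then show ?thesis unfolding eq using hpos by (simp add: abs_div divide_right_mono algebra_simps)
  qed
  define F where "F s = (v s - W) * G s" for s
  have Fi: "F integrable_on {a..b}"
  proof -
    have "(\<lambda>s. v s * G s - W * G s) integrable_on {a..b}"
      using vGi integrable_on_cmult_left[OF Gi, of W] by (intro integrable_diff) auto
    then show ?thesis unfolding F_def by (simp add: algebra_simps)
  qed
  have Eint: "(\<lambda>s. (v s - W) * (G s - c)) integrable_on {p..q}" if "a \<le> p" "q \<le> b" for c p q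
  proof -
    have "(\<lambda>s. F s - c * v s + c * W) integrable_on {a..b}"
      using Fi integrable_on_cmult_left[OF vi, of c] by (intro integrable_add integrable_diff) auto
    then have "(\<lambda>s. (v s - W) * (G s - c)) integrable_on {a..b}" unfolding F_def by (simp add: algebra_simps)
    then show ?thesis by (rule sub[OF _ that])
  qed
  have piece: "integral {p..q} F = G q * (\<Phi> q - \<Phi> p) + integral {p..q} (\<lambda>s. (v s - W) * (G s - G q))"
    if "a \<le> p" "p \<le> q" "q \<le> b" for p q
  proof -
    have vpq: "v integrable_on {p..q}" using sub[OF vi that(1,3)] .
    have c1: "(\<lambda>s. G q * v s - G q * W) integrable_on {p..q}"
      using integrable_on_cmult_left[OF vpq, of "G q"] by (intro integrable_diff) auto
    have "F = (\<lambda>s. (v s - W) * (G s - G q) + (G q * v s - G q * W))" unfolding F_def by (auto simp: algebra_simps)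
    then have "integral {p..q} F = integral {p..q} (\<lambda>s. (v s - W) * (G s - G q)) + integral {p..q} (\<lambda>s. G q * v s - G q * W)"
      using integral_add[OF Eint[OF that(1,3)] c1] by simp
    also have "integral {p..q} (\<lambda>s. G q * v s - G q * W) = G q * integral {p..q} v - (q - p) * (G q * W)"
      using integral_diff[OF integrable_on_cmult_left[OF vpq, of "G q"] integrable_const_ivl[of "G q * W" p q]] that
      by (simp add: mult.assoc)
    also have "integral {p..q} v = integral {a..q} v - integral {a..p} v" using integral_sub[OF vi that] .
    finally show ?thesis unfolding \<Phi>_def by (simp add: algebra_simps)
  qed
  have Epiece: "\<bar>integral {p..q} (\<lambda>s. (v s - W) * (G s - G q))\<bar> \<le> 2 * V * (lc * (q - p)) * (q - p)"
    if "a \<le> p" "p \<le> q" "q \<le> b" for p q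
  proof -
    have hi: "((\<lambda>s. (v s - W) * (G s - G q)) has_integral integral {p..q} (\<lambda>s. (v s - W) * (G s - G q))) {p..q}"
      using Eint[OF that(1,3)] by auto
    have "norm (integral {p..q} (\<lambda>s. (v s - W) * (G s - G q))) \<le> (2 * V * (lc * (q - p))) * Henstock_Kurzweil_Integration.content {p..q}"
    proof (rule has_integral_bound_real[OF _ finite.emptyI hi])
      show "0 \<le> 2 * V * (lc * (q - p))" using V0 l0 that by simp
      fix s assume s: "s \<in> {p..q} - {}"
      have "\<bar>v s - W\<bar> \<le> 2 * V" using vb[of s] Wb s that by auto
      moreover have "\<bar>G s - G q\<bar> \<le> lc * (q - p)"
      proof -
        have "\<bar>G s - G q\<bar> \<le> lc * \<bar>s - q\<bar>" using Gl[of s q] s that by auto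
        moreover have "\<bar>s - q\<bar> \<le> q - p" using s by auto
        ultimately show ?thesis using l0 by (meson mult_left_mono order_trans)
      qed
      ultimately show "norm ((v s - W) * (G s - G q)) \<le> 2 * V * (lc * (q - p))"
        by (simp add: abs_mult mult_mono)
    qed
    then show ?thesis using that by simp
  qed
  define I where "I = integral {a..b} F"
  have main: "\<bar>I\<bar> \<le> V * lc * h^2 / 3 + 2 * V * lc * h^2 / real N" if N1: "N \<ge> 1" for N
  proof -
    define \<delta> where "\<delta> = h / real N"
    have \<delta>pos: "\<delta> > 0" unfolding \<delta>_def using hpos N1 by simp
    define tt where "tt j = a + real j * \<delta>" for j
    have ttN: "tt N = b" unfolding tt_def \<delta>_def h_def using N1 by simp
    have tt0: "tt 0 = a" unfolding tt_def by simp
    have ttin: "a \<le> tt j" "tt j \<le> b" if "j \<le> N" for j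
    proof -
      show "a \<le> tt j" unfolding tt_def using \<delta>pos by simp
      have "real j * \<delta> \<le> real N * \<delta>" using that \<delta>pos by (simp add: mult_right_mono)
      then show "tt j \<le> b" using ttN unfolding tt_def by simp
    qed
    have ttS: "tt (Suc j) = tt j + \<delta>" for j unfolding tt_def by (simp add: algebra_simps)
    define \<Psi> where "\<Psi> t = integral {a..t} F" for t
    have "I = \<Psi> (tt N) - \<Psi> (tt 0)" unfolding I_def \<Psi>_def ttN tt0 by simp
    also have "\<dots> = (\<Sum>j<N. \<Psi> (tt (Suc j)) - \<Psi> (tt j))" by (rule sum_lessThan_telescope[symmetric])
    also have "\<dots> = (\<Sum>j<N. G (tt (Suc j)) * (\<Phi> (tt (Suc j)) - \<Phi> (tt j))
                + integral {tt j..tt (Suc j)} (\<lambda>s. (v s - W) * (G s - G (tt (Suc j)))))"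
    proof (rule sum.cong[OF refl])
      fix j assume "j \<in> {..<N}"
      then have j: "a \<le> tt j" "tt j \<le> tt (Suc j)" "tt (Suc j) \<le> b" using ttin[of j] ttin[of "Suc j"] ttS \<delta>pos by auto
      show "\<Psi> (tt (Suc j)) - \<Psi> (tt j) = G (tt (Suc j)) * (\<Phi> (tt (Suc j)) - \<Phi> (tt j))
                + integral {tt j..tt (Suc j)} (\<lambda>s. (v s - W) * (G s - G (tt (Suc j))))"
        using piece[OF j] integral_sub[OF Fi j] unfolding \<Psi>_def by simp
    qed
    also have "\<dots> = (\<Sum>j<N. G (tt (Suc j)) * (\<Phi> (tt (Suc j)) - \<Phi> (tt j)))
                + (\<Sum>j<N. integral {tt j..tt (Suc j)} (\<lambda>s. (v s - W) * (G s - G (tt (Suc j)))))"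
      by (simp add: sum.distrib)
    finally have Ieq: "I = (\<Sum>j<N. G (tt (Suc j)) * (\<Phi> (tt (Suc j)) - \<Phi> (tt j)))
                + (\<Sum>j<N. integral {tt j..tt (Suc j)} (\<lambda>s. (v s - W) * (G s - G (tt (Suc j)))))" .
    have S1eq: "(\<Sum>j<N. G (tt (Suc j)) * (\<Phi> (tt (Suc j)) - \<Phi> (tt j)))
        = (\<Sum>j<N. \<Phi> (tt (Suc j)) * (G (tt (Suc j)) - G (tt (Suc (Suc j)))))"
      using abel_sum[of "\<lambda>j. G (tt j)" "\<lambda>j. \<Phi> (tt j)" N] ttN tt0 \<Phi>a \<Phi>b by simp
    have trm: "\<bar>\<Phi> (tt (Suc j)) * (G (tt (Suc j)) - G (tt (Suc (Suc j))))\<bar>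
        \<le> lc * \<delta> * (2 * V * (real j + 1) * \<delta> * ((real N - (real j + 1)) * \<delta>) / h)" if j: "j < N" for j
    proof -
      have e1: "tt (Suc j) - a = (real j + 1) * \<delta>" unfolding tt_def by (simp add: algebra_simps)
      have e2: "b - tt (Suc j) = (real N - (real j + 1)) * \<delta>" using ttN unfolding tt_def by (simp add: algebra_simps)
      have rhs0: "0 \<le> lc * \<delta> * (2 * V * (real j + 1) * \<delta> * ((real N - (real j + 1)) * \<delta>) / h)"
        using l0 \<delta>pos V0 j hpos by (intro mult_nonneg_nonneg divide_nonneg_pos) auto
      show ?thesis
      proof (cases "Suc j = N")
        case True
        then show ?thesis using \<Phi>b ttN rhs0 by simp
      next
        case False
        then have j2: "Suc (Suc j) \<le> N" using j by simp
        have "\<bar>G (tt (Suc j)) - G (tt (Suc (Suc j)))\<bar> \<le> lc * \<delta>"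
          using Gl[of "tt (Suc j)" "tt (Suc (Suc j))"] ttin[of "Suc j"] ttin[of "Suc (Suc j)"] j2 ttS[of "Suc j"] \<delta>pos
          by simp
        moreover have "\<bar>\<Phi> (tt (Suc j))\<bar> \<le> 2 * V * (real j + 1) * \<delta> * ((real N - (real j + 1)) * \<delta>) / h"
          using \<Phi>bd[of "tt (Suc j)"] ttin[of "Suc j"] j e1 e2 by (simp add: mult.assoc)
        ultimately have "\<bar>G (tt (Suc j)) - G (tt (Suc (Suc j)))\<bar> * \<bar>\<Phi> (tt (Suc j))\<bar>
            \<le> (lc * \<delta>) * (2 * V * (real j + 1) * \<delta> * ((real N - (real j + 1)) * \<delta>) / h)"
          by (intro mult_mono) (use l0 \<delta>pos in auto)
        then show ?thesis by (metis abs_mult mult.commute)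
      qed
    qed
    have S1b: "\<bar>\<Sum>j<N. \<Phi> (tt (Suc j)) * (G (tt (Suc j)) - G (tt (Suc (Suc j))))\<bar> \<le> V * lc * h^2 / 3"
    proof -
      have "\<bar>\<Sum>j<N. \<Phi> (tt (Suc j)) * (G (tt (Suc j)) - G (tt (Suc (Suc j))))\<bar>
          \<le> (\<Sum>j<N. \<bar>\<Phi> (tt (Suc j)) * (G (tt (Suc j)) - G (tt (Suc (Suc j))))\<bar>)" by (rule sum_abs)
      also have "\<dots> \<le> (\<Sum>j<N. lc * \<delta> * (2 * V * (real j + 1) * \<delta> * ((real N - (real j + 1)) * \<delta>) / h))"
        by (rule sum_mono) (use trm in auto)
      also have "\<dots> = (\<Sum>j<N. 2 * V * lc * \<delta>^3 / h * ((real j + 1) * (real N - (real j + 1))))"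
        by (rule sum.cong[OF refl]) (simp add: power3_eq_cube)
      also have "\<dots> = 2 * V * lc * \<delta>^3 / h * (\<Sum>j<N. (real j + 1) * (real N - (real j + 1)))"
        by (simp add: sum_distrib_left)
      also have "\<dots> = 2 * V * lc * \<delta>^3 / h * ((real N ^ 3 - real N) / 6)"
      proof -
        have "(\<Sum>j<N. (real j + 1) * (real N - (real j + 1))) = (real N ^ 3 - real N) / 6"
          unfolding sum_jN by (simp add: power3_eq_cube field_simps)
        then show ?thesis by (simp only:)
      qed
      also have "\<dots> \<le> 2 * V * lc * \<delta>^3 / h * (real N ^ 3 / 6)"
        using V0 l0 \<delta>pos hpos by (intro mult_left_mono) auto
      also have "\<dots> = V * lc * h^2 / 3"
        unfolding \<delta>_def using N1 hpos by (simp add: power3_eq_cube power2_eq_square field_simps)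
      finally show ?thesis .
    qed
    have S2b: "\<bar>\<Sum>j<N. integral {tt j..tt (Suc j)} (\<lambda>s. (v s - W) * (G s - G (tt (Suc j))))\<bar> \<le> 2 * V * lc * h^2 / real N"
    proof -
      have "\<bar>\<Sum>j<N. integral {tt j..tt (Suc j)} (\<lambda>s. (v s - W) * (G s - G (tt (Suc j))))\<bar>
          \<le> (\<Sum>j<N. \<bar>integral {tt j..tt (Suc j)} (\<lambda>s. (v s - W) * (G s - G (tt (Suc j))))\<bar>)" by (rule sum_abs)
      also have "\<dots> \<le> (\<Sum>j<N. 2 * V * (lc * \<delta>) * \<delta>)"
      proof (rule sum_mono)
        fix j assume "j \<in> {..<N}"
        then have j: "a \<le> tt j" "tt j \<le> tt (Suc j)" "tt (Suc j) \<le> b" using ttin[of j] ttin[of "Suc j"] ttS \<delta>pos by auto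
        show "\<bar>integral {tt j..tt (Suc j)} (\<lambda>s. (v s - W) * (G s - G (tt (Suc j))))\<bar> \<le> 2 * V * (lc * \<delta>) * \<delta>"
          using Epiece[OF j] ttS[of j] by simp
      qed
      also have "\<dots> = 2 * V * lc * h^2 / real N"
        unfolding \<delta>_def using N1 by (simp add: power2_eq_square field_simps)
      finally show ?thesis .
    qed
    show ?thesis unfolding Ieq using S1eq S1b S2b by (smt (verit) abs_triangle_ineq)
  qed
  have "\<bar>I\<bar> \<le> V * lc * h^2 / 3"
    by (rule archimedes_le[of _ _ "2 * V * lc * h^2"]) (use main in auto)
  then show ?thesis unfolding I_def F_def W_def h_def .
qed




lemma vint:
  fixes v :: "real \<Rightarrow> real"
  assumes "v \<in> borel_measurable lebesgue" "\<And>t. \<bar>v t\<bar> \<le> V"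
  shows "v absolutely_integrable_on {p..q}"
proof (rule measurable_bounded_by_integrable_imp_absolutely_integrable[of _ _ "\<lambda>_. V"])
  show "v \<in> borel_measurable (lebesgue_on {p..q})" using assms(1) by (rule measurable_restrict_space1)
qed (use assms(2) in auto)

lemma prod_int:
  fixes v G :: "real \<Rightarrow> real"
  assumes "v absolutely_integrable_on {p..q}" "continuous_on {p..q} G"
  shows "(\<lambda>s. v s * G s) integrable_on {p..q}"
proof -
  have "G \<in> borel_measurable (lebesgue_on {p..q})"
    using assms(2) by (rule continuous_imp_measurable_on_sets_lebesgue) auto
  moreover have "bounded (G ` {p..q})"
    using compact_continuous_image[OF assms(2)] compact_imp_bounded by blast
  ultimately have "(\<lambda>s. G s * v s) absolutely_integrable_on {p..q}"
    using absolutely_integrable_bounded_measurable_product_real[of G "{p..q}" v] assms(1) by auto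
  then show ?thesis using set_lebesgue_integral_eq_integral(1) by (simp add: mult.commute)
qed

lemma step_bound:
  fixes Q :: "real \<Rightarrow> real^'n"
  assumes "(Q has_integral (Z1 - Z0)) {t..t+\<delta>}" "0 < \<delta>"
    "\<And>s. s \<in> {t..t+\<delta>} \<Longrightarrow> maxnorm (Q s - q0) \<le> M"
  shows "maxnorm Z1 \<le> maxnorm (Z0 + \<delta> *\<^sub>R q0) + M * \<delta>"
proof -
  have M0: "0 \<le> M" using assms(3)[of t] assms(2) maxnorm_nonneg[of "Q t - q0"] by auto
  have "((\<lambda>s. Q s - q0) has_integral (Z1 - Z0 - Henstock_Kurzweil_Integration.content {t..t+\<delta>} *\<^sub>R q0)) {t..t+\<delta>}"
    by (rule has_integral_diff[OF assms(1) has_integral_const_real])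
  then have "((\<lambda>s. Q s - q0) has_integral (Z1 - (Z0 + \<delta> *\<^sub>R q0))) {t..t+\<delta>}"
    using assms(2) by (simp add: algebra_simps)
  then have "maxnorm (Z1 - (Z0 + \<delta> *\<^sub>R q0)) \<le> M * (t + \<delta> - t)"
    by (rule has_integral_maxnorm_bound) (use assms M0 in auto)
  then show ?thesis using maxnorm_triangle[of "Z0 + \<delta> *\<^sub>R q0" "Z1 - (Z0 + \<delta> *\<^sub>R q0)"] by simp
qed

lemma cont_maxnorm:
  fixes P :: "real \<Rightarrow> real^'n"
  assumes "continuous_on S P" "t \<in> S" "\<epsilon> > 0"
  shows "\<exists>d>0. \<forall>s\<in>S. \<bar>s - t\<bar> < d \<longrightarrow> maxnorm (P s - P t) \<le> \<epsilon>"
proof -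
  obtain d where "d > 0" "\<forall>s\<in>S. dist s t < d \<longrightarrow> dist (P s) (P t) < \<epsilon>"
    using assms unfolding continuous_on_iff by metis
  then show ?thesis
    by (metis dist_norm dist_real_def maxnorm_le_norm order_le_less_trans less_imp_le)
qed




lemma maxnorm_sum_scale:
  fixes z :: "nat \<Rightarrow> real^'n"
  assumes "finite I" "\<And>i. i \<in> I \<Longrightarrow> \<bar>c i\<bar> \<le> a i" "\<And>i. i \<in> I \<Longrightarrow> maxnorm (z i) \<le> b i"
  shows "maxnorm (\<Sum>i\<in>I. c i *\<^sub>R z i) \<le> (\<Sum>i\<in>I. a i * b i)"
proof -
  have "maxnorm (\<Sum>i\<in>I. c i *\<^sub>R z i) \<le> (\<Sum>i\<in>I. maxnorm (c i *\<^sub>R z i))" by (rule maxnorm_sum[OF assms(1)])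
  also have "\<dots> \<le> (\<Sum>i\<in>I. a i * b i)"
  proof (rule sum_mono)
    fix i assume i: "i \<in> I"
    have "\<bar>c i\<bar> * maxnorm (z i) \<le> a i * b i"
      by (rule mult_mono) (use assms(2,3)[OF i] maxnorm_nonneg in auto)
    then show "maxnorm (c i *\<^sub>R z i) \<le> a i * b i" by (simp add: maxnorm_scale)
  qed
  finally show ?thesis .
qed

lemma matnorm_nonneg: "0 \<le> matnorm Q"
  using matnorm_row[of Q undefined] by (meson order_trans sum_nonneg abs_ge_zero)

theorem mainTheorem3:
  fixes f :: "real^'n \<Rightarrow> real^'n" and Df :: "real^'n \<Rightarrow> real^'n^'n"
    and g :: "nat \<Rightarrow> real^'n \<Rightarrow> real^'n" and Dg :: "nat \<Rightarrow> real^'n \<Rightarrow> real^'n^'n"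
    and m :: nat and v :: "nat \<Rightarrow> real \<Rightarrow> real" and V Ki Li :: "nat \<Rightarrow> real"
    and x y :: "real \<Rightarrow> real^'n" and tk tk1 K L \<Lambda> :: real and B :: "(real^'n) set"
  assumes m: "m \<ge> 1"
    and h: "tk < tk1"
    and f_C1: "\<And>z. (f has_derivative (\<lambda>u. Df z *v u)) (at z)" "continuous_on UNIV Df"
    and g_C1: "\<And>i z. i < m \<Longrightarrow> (g i has_derivative (\<lambda>u. Dg i z *v u)) (at z)"
              "\<And>i. i < m \<Longrightarrow> continuous_on UNIV (Dg i)"
    and v_meas: "\<And>i. i < m \<Longrightarrow> v i \<in> borel_measurable lebesgue"
    and V_pos: "\<And>i. i < m \<Longrightarrow> V i > 0"
    and v_bd: "\<And>i t. i < m \<Longrightarrow> \<bar>v i t\<bar> \<le> V i"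
    and x_sol: "\<And>t. t \<in> {tk..tk1} \<Longrightarrow>
        ((\<lambda>s. f (x s) + (\<Sum>i<m. v i s *\<^sub>R g i (x s))) has_integral (x t - x tk)) {tk..t}"
    and y_sol: "\<And>t. t \<in> {tk..tk1} \<Longrightarrow>
        (y has_vector_derivative
           (f (y t) + (\<Sum>i<m. (integral {tk..tk1} (v i) / (tk1 - tk)) *\<^sub>R g i (y t))))
        (at t within {tk..tk1})"
    and y_init: "y tk = x tk"
    and B_convex: "convex B"
    and xB: "\<And>t. t \<in> {tk..tk1} \<Longrightarrow> x t \<in> B"
    and yB: "\<And>t. t \<in> {tk..tk1} \<Longrightarrow> y t \<in> B"
    and f_bd: "\<And>z. z \<in> B \<Longrightarrow> maxnorm (f z) \<le> K"
    and g_bd: "\<And>i z. i < m \<Longrightarrow> z \<in> B \<Longrightarrow> maxnorm (g i z) \<le> Ki i"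
    and Df_bd: "\<And>z. z \<in> B \<Longrightarrow> matnorm (Df z) \<le> L"
    and Dg_bd: "\<And>i z. i < m \<Longrightarrow> z \<in> B \<Longrightarrow> matnorm (Dg i z) \<le> Li i"
    and Df_log: "\<And>z. z \<in> B \<Longrightarrow> lognorm (Df z) \<le> \<Lambda>"
    and Lam: "\<Lambda> \<noteq> 0"
  shows "maxnorm (x tk1 - y tk1) \<le>
    (tk1 - tk)^2 * (((K + (\<Sum>i<m. V i * Ki i)) * (\<Sum>i<m. V i * Li i)) / 3
      + 2 * (\<Sum>i<m. V i * Ki i) * (L + (\<Sum>i<m. V i * Li i))
          * ((exp (\<Lambda> * (tk1 - tk)) - 1) / (\<Lambda> * (tk1 - tk))))"
proof -
  define h where "h = tk1 - tk"
  have hpos: "h > 0" using h unfolding h_def by simp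
  define I where "I = {tk..tk1}"
  define W where "W i = integral {tk..tk1} (v i) / (tk1 - tk)" for i
  define K' where "K' = (\<Sum>i<m. V i * Ki i)"
  define L' where "L' = (\<Sum>i<m. V i * Li i)"
  have tkI: "tk \<in> I" "tk1 \<in> I" using h unfolding I_def by auto
  have Bne: "x tk \<in> B" using xB tkI unfolding I_def by auto
  have Ki0: "0 \<le> Ki i" if "i < m" for i using g_bd[OF that Bne] maxnorm_nonneg order_trans by blast
  have Li0: "0 \<le> Li i" if "i < m" for i using Dg_bd[OF that Bne] matnorm_nonneg order_trans by blast
  have L0: "0 \<le> L" using Df_bd[OF Bne] matnorm_nonneg order_trans by blast
  have K0: "0 \<le> K" using f_bd[OF Bne] maxnorm_nonneg order_trans by blast
  have V0: "0 \<le> V i" if "i < m" for i using V_pos[OF that] by simp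
  have K'0: "0 \<le> K'" unfolding K'_def using Ki0 V0 by (intro sum_nonneg mult_nonneg_nonneg) auto
  have L'0: "0 \<le> L'" unfolding L'_def using Li0 V0 by (intro sum_nonneg mult_nonneg_nonneg) auto
  have vA: "v i absolutely_integrable_on {p..q}" if "i < m" for i p q
    using vint[OF v_meas[OF that] v_bd[OF that]] .
  have vInt: "v i integrable_on {p..q}" if "i < m" for i p q
    using vA[OF that] set_lebesgue_integral_eq_integral(1) by blast
  have Wb: "\<bar>W i\<bar> \<le> V i" if "i < m" for i
  proof -
    have "(v i has_integral integral {tk..tk1} (v i)) {tk..tk1}" using vInt[OF that] by auto
    then have "norm (integral {tk..tk1} (v i)) \<le> V i * Henstock_Kurzweil_Integration.content {tk..tk1}"
      by (rule has_integral_bound_real[OF V0[OF that] finite.emptyI]) (use v_bd[OF that] in auto)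
    then show ?thesis unfolding W_def using h by (simp add: abs_div divide_le_eq)
  qed
  have fc: "continuous_on UNIV f"
    using f_C1(1) has_derivative_continuous continuous_at_imp_continuous_on by blast
  have gc: "continuous_on UNIV (g i)" if "i < m" for i
    using g_C1(1)[OF that] has_derivative_continuous continuous_at_imp_continuous_on by blast
  define Fx where "Fx s = f (x s) + (\<Sum>i<m. v i s *\<^sub>R g i (x s))" for s
  define Ft where "Ft s = f (x s) + (\<Sum>i<m. W i *\<^sub>R g i (x s))" for s
  define Fy where "Fy s = f (y s) + (\<Sum>i<m. W i *\<^sub>R g i (y s))" for s
  have Fxb: "maxnorm (Fx s) \<le> K + K'" if "s \<in> I" for s
  proof -
    have "maxnorm (\<Sum>i<m. v i s *\<^sub>R g i (x s)) \<le> K'" unfolding K'_def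
      by (rule maxnorm_sum_scale) (use v_bd g_bd xB that I_def in auto)
    then show ?thesis unfolding Fx_def using f_bd[OF xB] that I_def maxnorm_triangle
      by (smt (verit) atLeastAtMost_iff)
  qed
  have xdiff: "(Fx has_integral (x q - x p)) {p..q}" if "tk \<le> p" "p \<le> q" "q \<le> tk1" for p q
    using has_integral_sub_interval[OF x_sol[of q] x_sol[of p]] that unfolding Fx_def by auto
  have xlip: "maxnorm (x q - x p) \<le> (K + K') * \<bar>q - p\<bar>" if "p \<in> I" "q \<in> I" for p q
  proof -
    have *: "maxnorm (x q - x p) \<le> (K + K') * \<bar>q - p\<bar>" if "p \<in> I" "q \<in> I" "p \<le> q" for p q
      using has_integral_maxnorm_bound[OF xdiff[of p q] that(3)] that K0 K'0 Fxb unfolding I_def by auto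
    show ?thesis
    proof (cases "p \<le> q")
      case True then show ?thesis using * that by auto
    next
      case False then show ?thesis using *[of q p] that maxnorm_minus[of "x q" "x p"] by (auto simp: abs_minus_commute)
    qed
  qed
  have xc: "continuous_on I x"
  proof (rule lipschitz_on_continuous_on[of "real CARD('n) * (K + K')"])
    show "(real CARD('n) * (K + K'))-lipschitz_on I x" unfolding lipschitz_on_def
    proof (intro conjI ballI)
      show "0 \<le> real CARD('n) * (K + K')" using K0 K'0 by simp
      fix p q assume "p \<in> I" "q \<in> I"
      have "dist (x p) (x q) \<le> real CARD('n) * maxnorm (x p - x q)" unfolding dist_norm by (rule norm_le_maxnorm)
      also have "\<dots> \<le> real CARD('n) * ((K + K') * \<bar>p - q\<bar>)"
        using xlip[OF \<open>q \<in> I\<close> \<open>p \<in> I\<close>] by (intro mult_left_mono) auto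
      finally show "dist (x p) (x q) \<le> real CARD('n) * (K + K') * dist p q" by (simp add: dist_real_def mult.assoc)
    qed
  qed
  have yder: "(y has_vector_derivative Fy t) (at t within I)" if "t \<in> I" for t
    using y_sol[of t] that unfolding Fy_def W_def I_def by auto
  have yc: "continuous_on I y" using yder by (rule continuous_on_vector_derivative)
  have ydiff: "(Fy has_integral (y q - y p)) {p..q}" if "tk \<le> p" "p \<le> q" "q \<le> tk1" for p q
  proof (rule fundamental_theorem_of_calculus[OF that(2)])
    fix s assume "s \<in> {p..q}"
    then show "(y has_vector_derivative Fy s) (at s within {p..q})"
      using yder[of s] that has_vector_derivative_within_subset[of y "Fy s" s I "{p..q}"] unfolding I_def by auto
  qed
  have fxc: "continuous_on I (\<lambda>s. f (x s))" using continuous_on_compose2[OF fc xc] by auto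
  have fyc: "continuous_on I (\<lambda>s. f (y s))" using continuous_on_compose2[OF fc yc] by auto
  have gxc: "continuous_on I (\<lambda>s. g i (x s))" if "i < m" for i using continuous_on_compose2[OF gc[OF that] xc] by auto
  have gyc: "continuous_on I (\<lambda>s. g i (y s))" if "i < m" for i using continuous_on_compose2[OF gc[OF that] yc] by auto
  have Ftc: "continuous_on I Ft" unfolding Ft_def
    by (intro continuous_on_add fxc continuous_on_sum continuous_on_scaleR continuous_on_const) (use gxc in auto)
  have Fyc: "continuous_on I Fy" unfolding Fy_def
    by (intro continuous_on_add fyc continuous_on_sum continuous_on_scaleR continuous_on_const) (use gyc in auto)
  define xt where "xt t = x tk + integral {tk..t} Ft" for t
  have FtI: "(Ft has_integral integral {tk..q} Ft) {tk..q}" if "q \<in> I" for q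
  proof -
    have "Ft integrable_on {tk..q}"
      using integrable_continuous_interval[OF continuous_on_subset[OF Ftc]] that unfolding I_def by auto
    then show ?thesis by auto
  qed
  have Ftdiff: "(Ft has_integral (xt q - xt p)) {p..q}" if "tk \<le> p" "p \<le> q" "q \<le> tk1" for p q
    using has_integral_sub_interval[OF FtI[of q] FtI[of p]] that unfolding xt_def I_def by auto
  have xt0: "xt tk = x tk" unfolding xt_def by simp
  define e where "e t = x t - y t" for t
  define u where "u t = xt t - y t" for t
  define R where "R t = x t - xt t" for t
  have FxFt: "Fx s - Ft s = (\<Sum>i<m. (v i s - W i) *\<^sub>R g i (x s))" for s
    unfolding Fx_def Ft_def by (simp add: scaleR_diff_left sum_subtractf)
  have Rint: "((\<lambda>s. \<Sum>i<m. (v i s - W i) *\<^sub>R g i (x s)) has_integral R t) {tk..t}" if "t \<in> I" for t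
    using has_integral_diff[OF xdiff[of tk t] Ftdiff[of tk t]] that xt0 unfolding R_def FxFt[symmetric] I_def by auto
  have Rb: "maxnorm (R t) \<le> 2 * K' * (t - tk)" if "t \<in> I" for t
  proof (rule has_integral_maxnorm_bound[OF Rint[OF that]])
    show "tk \<le> t" using that unfolding I_def by auto
    show "0 \<le> 2 * K'" using K'0 by simp
    fix s assume s: "s \<in> {tk..t}"
    have "maxnorm (\<Sum>i<m. (v i s - W i) *\<^sub>R g i (x s)) \<le> (\<Sum>i<m. (2 * V i) * Ki i)"
    proof (rule maxnorm_sum_scale)
      fix i assume "i \<in> {..<m}"
      then show "\<bar>v i s - W i\<bar> \<le> 2 * V i" using v_bd[of i s] Wb[of i] by auto
      show "maxnorm (g i (x s)) \<le> Ki i" using g_bd \<open>i \<in> {..<m}\<close> xB s that unfolding I_def by auto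
    qed simp
    then show "maxnorm (\<Sum>i<m. (v i s - W i) *\<^sub>R g i (x s)) \<le> 2 * K'"
      unfolding K'_def by (simp add: sum_distrib_left mult.assoc)
  qed
  define \<phi> where "\<phi> s = (exp (\<Lambda> * s) - 1) / \<Lambda>" for s
  have \<phi>0: "0 \<le> \<phi> s" if "0 \<le> s" for s
  proof (cases "\<Lambda> > 0")
    case True
    then have "1 \<le> exp (\<Lambda> * s)" using that by simp
    then show ?thesis using True unfolding \<phi>_def by simp
  next
    case False
    then have neg: "\<Lambda> < 0" using Lam by simp
    then have "exp (\<Lambda> * s) \<le> 1" using that by (simp add: mult_nonpos_nonneg)
    then show ?thesis unfolding \<phi>_def using neg by (simp add: divide_nonpos_neg)
  qed
  have \<Lambda>\<phi>: "\<Lambda> * \<phi> s = exp (\<Lambda> * s) - 1" for s unfolding \<phi>_def using Lam by simp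
  have \<phi>der: "((\<lambda>t. \<phi> (t - tk)) has_real_derivative exp (\<Lambda> * (t - tk))) (at t within I)" for t
    unfolding \<phi>_def using Lam by (auto intro!: derivative_eq_intros)
  define Ne where "Ne t = maxnorm (e t)" for t
  have ec: "continuous_on I e" unfolding e_def by (intro continuous_on_diff xc yc)
  have Nec: "continuous_on I Ne" unfolding Ne_def using maxnorm_continuous[OF ec] .
  define C where "C s = f (x s) - f (y s)" for s
  have Cc: "continuous_on I C" unfolding C_def by (intro continuous_on_diff fxc fyc)
  have \<delta>L: "\<delta> * L \<le> 1" if "0 < \<delta>" "\<delta> < 1 / (L + 1)" for \<delta>
  proof -
    have "\<delta> * (L + 1) < 1" using that L0 by (simp add: field_simps)
    then show ?thesis using that(1) by (simp add: algebra_simps)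
  qed
  have dA: "\<exists>\<eta>>0. \<forall>\<delta>. 0 < \<delta> \<longrightarrow> \<delta> < \<eta> \<longrightarrow> t + \<delta> \<le> tk1 \<longrightarrow>
             Ne (t + \<delta>) \<le> Ne t + \<delta> * (\<Lambda> * Ne t + 2 * K' + \<epsilon>)"
    if t: "t \<in> {tk..<tk1}" and \<epsilon>: "\<epsilon> > 0" for t \<epsilon>
  proof -
    have tI: "t \<in> I" using t unfolding I_def by auto
    obtain d where d: "d > 0" "\<forall>s\<in>I. \<bar>s - t\<bar> < d \<longrightarrow> maxnorm (C s - C t) \<le> \<epsilon>"
      using cont_maxnorm[OF Cc tI \<epsilon>] by blast
    define \<eta> where "\<eta> = min d (1 / (L + 1))"
    have \<eta>pos: "\<eta> > 0" unfolding \<eta>_def using d L0 by simp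
    show ?thesis
    proof (intro exI[of _ \<eta>] conjI allI impI \<eta>pos)
      fix \<delta> assume \<delta>: "0 < \<delta>" "\<delta> < \<eta>" "t + \<delta> \<le> tk1"
      have int: "((\<lambda>s. Fx s - Fy s) has_integral (e (t + \<delta>) - e t)) {t..t + \<delta>}"
        using has_integral_diff[OF xdiff[of t "t + \<delta>"] ydiff[of t "t + \<delta>"]] t \<delta> unfolding e_def
        by (auto simp: algebra_simps)
      have pw: "maxnorm (Fx s - Fy s - C t) \<le> \<epsilon> + 2 * K'" if s: "s \<in> {t..t + \<delta>}" for s
      proof -
        have sI: "s \<in> I" using s t \<delta> unfolding I_def by auto
        have eq: "Fx s - Fy s - C t = (C s - C t) + ((\<Sum>i<m. v i s *\<^sub>R g i (x s)) - (\<Sum>i<m. W i *\<^sub>R g i (y s)))"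
          unfolding Fx_def Fy_def C_def by (simp add: algebra_simps)
        have m1: "maxnorm (C s - C t) \<le> \<epsilon>" using d(2) sI s \<delta> unfolding \<eta>_def by auto
        have m2: "maxnorm (\<Sum>i<m. v i s *\<^sub>R g i (x s)) \<le> K'" unfolding K'_def
          by (rule maxnorm_sum_scale) (use v_bd g_bd xB sI I_def in auto)
        have m3: "maxnorm (\<Sum>i<m. W i *\<^sub>R g i (y s)) \<le> K'" unfolding K'_def
          by (rule maxnorm_sum_scale) (use Wb g_bd yB sI I_def in auto)
        show ?thesis unfolding eq
          using maxnorm_triangle[of "C s - C t" "(\<Sum>i<m. v i s *\<^sub>R g i (x s)) - (\<Sum>i<m. W i *\<^sub>R g i (y s))"]
            maxnorm_diff_triangle[of "\<Sum>i<m. v i s *\<^sub>R g i (x s)" "\<Sum>i<m. W i *\<^sub>R g i (y s)"] m1 m2 m3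
          by linarith
      qed
      have st: "Ne (t + \<delta>) \<le> maxnorm (e t + \<delta> *\<^sub>R C t) + (\<epsilon> + 2 * K') * \<delta>"
        unfolding Ne_def by (rule step_bound[OF int \<delta>(1) pw])
      have "maxnorm (e t + \<delta> *\<^sub>R (f (x t) - f (y t))) \<le> (1 + \<delta> * \<Lambda>) * maxnorm (e t) + \<delta> * L * maxnorm (x t - y t - e t)"
        by (rule osl_maxnorm[OF f_C1(1) B_convex xB yB Df_bd Df_log])
           (use tI I_def \<delta> \<delta>L[of \<delta>] \<eta>_def in auto)
      then have "maxnorm (e t + \<delta> *\<^sub>R C t) \<le> (1 + \<delta> * \<Lambda>) * Ne t"
        unfolding C_def Ne_def by (simp add: e_def)
      then show "Ne (t + \<delta>) \<le> Ne t + \<delta> * (\<Lambda> * Ne t + 2 * K' + \<epsilon>)"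
        using st by (simp add: algebra_simps)
    qed
  qed
  have NeB: "Ne t \<le> 2 * K' * \<phi> (t - tk)" if "t \<in> I" for t
  proof (rule comparison[of tk tk1 Ne "\<lambda>t. 2 * K' * \<phi> (t - tk)" "\<lambda>t. 2 * K' * exp (\<Lambda> * (t - tk))" \<Lambda> "\<lambda>_. 2 * K'"])
    show "tk \<le> tk1" using h by simp
    show "continuous_on {tk..tk1} Ne" using Nec unfolding I_def .
    show "((\<lambda>t. 2 * K' * \<phi> (t - tk)) has_real_derivative 2 * K' * exp (\<Lambda> * (t - tk))) (at t within {tk..tk1})" for t
      using DERIV_cmult[OF \<phi>der[of t], of "2 * K'"] unfolding I_def .
    show "\<Lambda> * (2 * K' * \<phi> (t - tk)) + 2 * K' \<le> 2 * K' * exp (\<Lambda> * (t - tk))" for t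
    proof -
      have "\<Lambda> * (2 * K' * \<phi> (t - tk)) + 2 * K' = 2 * K' * (\<Lambda> * \<phi> (t - tk) + 1)" by (simp add: algebra_simps)
      then show ?thesis using \<Lambda>\<phi>[of "t - tk"] by simp
    qed
    show "Ne tk \<le> 2 * K' * \<phi> (tk - tk)" unfolding Ne_def e_def \<phi>_def using y_init by simp
    show "t \<in> {tk..tk1}" using that unfolding I_def .
  qed (use dA in auto)
  define Nu where "Nu t = maxnorm (u t)" for t
  have intc: "continuous_on {tk..tk1} (\<lambda>t. integral {tk..t} Ft)"
    by (rule continuous_on_vector_derivative) (rule integral_has_vector_derivative[OF Ftc[unfolded I_def]])
  have uc: "continuous_on I u" unfolding u_def xt_def
    using yc intc unfolding I_def by (intro continuous_on_diff continuous_on_add continuous_on_const) auto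
  have Nuc: "continuous_on I Nu" unfolding Nu_def using maxnorm_continuous[OF uc] .
  define H where "H s = Ft s - Fy s" for s
  have Hc: "continuous_on I H" unfolding H_def by (intro continuous_on_diff Ftc Fyc)
  define \<beta> where "\<beta> t = 2 * K' * L * (t - tk) + L' * (2 * K' * \<phi> (t - tk))" for t
  have dB: "\<exists>\<eta>>0. \<forall>\<delta>. 0 < \<delta> \<longrightarrow> \<delta> < \<eta> \<longrightarrow> t + \<delta> \<le> tk1 \<longrightarrow>
             Nu (t + \<delta>) \<le> Nu t + \<delta> * (\<Lambda> * Nu t + \<beta> t + \<epsilon>)"
    if t: "t \<in> {tk..<tk1}" and \<epsilon>: "\<epsilon> > 0" for t \<epsilon>
  proof -
    have tI: "t \<in> I" using t unfolding I_def by auto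
    obtain d where d: "d > 0" "\<forall>s\<in>I. \<bar>s - t\<bar> < d \<longrightarrow> maxnorm (H s - H t) \<le> \<epsilon>"
      using cont_maxnorm[OF Hc tI \<epsilon>] by blast
    define \<eta> where "\<eta> = min d (1 / (L + 1))"
    have \<eta>pos: "\<eta> > 0" unfolding \<eta>_def using d L0 by simp
    show ?thesis
    proof (intro exI[of _ \<eta>] conjI allI impI \<eta>pos)
      fix \<delta> assume \<delta>: "0 < \<delta>" "\<delta> < \<eta>" "t + \<delta> \<le> tk1"
      have int: "(H has_integral (u (t + \<delta>) - u t)) {t..t + \<delta>}"
        using has_integral_diff[OF Ftdiff[of t "t + \<delta>"] ydiff[of t "t + \<delta>"]] t \<delta> unfolding u_def H_def
        by (auto simp: algebra_simps)
      have pw: "maxnorm (H s - H t) \<le> \<epsilon>" if s: "s \<in> {t..t + \<delta>}" for s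
      proof -
        have sI: "s \<in> I" using s t \<delta> unfolding I_def by auto
        show ?thesis using d(2) sI s \<delta> unfolding \<eta>_def by auto
      qed
      have st: "Nu (t + \<delta>) \<le> maxnorm (u t + \<delta> *\<^sub>R H t) + \<epsilon> * \<delta>"
        unfolding Nu_def by (rule step_bound[OF int \<delta>(1) pw])
      have xtB: "x t \<in> B" "y t \<in> B" using xB yB tI unfolding I_def by auto
      have Heq: "u t + \<delta> *\<^sub>R H t = (u t + \<delta> *\<^sub>R (f (x t) - f (y t))) + \<delta> *\<^sub>R (\<Sum>i<m. W i *\<^sub>R (g i (x t) - g i (y t)))"
        unfolding H_def Ft_def Fy_def by (simp add: algebra_simps scaleR_diff_right sum_subtractf)
      have o1: "maxnorm (u t + \<delta> *\<^sub>R (f (x t) - f (y t))) \<le> (1 + \<delta> * \<Lambda>) * maxnorm (u t) + \<delta> * L * maxnorm (x t - y t - u t)"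
        by (rule osl_maxnorm[OF f_C1(1) B_convex xtB Df_bd Df_log])
           (use \<delta> \<delta>L[of \<delta>] \<eta>_def in auto)
      have "x t - y t - u t = R t" unfolding u_def R_def by simp
      then have o1': "maxnorm (u t + \<delta> *\<^sub>R (f (x t) - f (y t))) \<le> (1 + \<delta> * \<Lambda>) * Nu t + \<delta> * L * (2 * K' * (t - tk))"
        using o1 Rb[OF tI] \<delta>(1) L0 unfolding Nu_def
        by (smt (verit, best) mult_left_mono mult_nonneg_nonneg)
      have o2: "maxnorm (\<Sum>i<m. W i *\<^sub>R (g i (x t) - g i (y t))) \<le> (\<Sum>i<m. V i * (Li i * Ne t))"
      proof (rule maxnorm_sum_scale)
        fix i assume i: "i \<in> {..<m}"
        show "\<bar>W i\<bar> \<le> V i" using Wb i by auto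
        show "maxnorm (g i (x t) - g i (y t)) \<le> Li i * Ne t"
          unfolding Ne_def e_def using i by (intro lip_maxnorm[OF g_C1(1) B_convex xtB Dg_bd]) auto
      qed simp
      also have "\<dots> = L' * Ne t" unfolding L'_def by (simp add: sum_distrib_right mult.assoc)
      also have "\<dots> \<le> L' * (2 * K' * \<phi> (t - tk))" using NeB[OF tI] L'0 by (rule mult_left_mono)
      finally have o2': "maxnorm (\<delta> *\<^sub>R (\<Sum>i<m. W i *\<^sub>R (g i (x t) - g i (y t)))) \<le> \<delta> * (L' * (2 * K' * \<phi> (t - tk)))"
        using \<delta>(1) by (simp add: maxnorm_scale mult_left_mono)
      have "Nu (t + \<delta>) \<le> (1 + \<delta> * \<Lambda>) * Nu t + \<delta> * L * (2 * K' * (t - tk)) + \<delta> * (L' * (2 * K' * \<phi> (t - tk))) + \<epsilon> * \<delta>"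
        using st o1' o2' maxnorm_triangle[of "u t + \<delta> *\<^sub>R (f (x t) - f (y t))" "\<delta> *\<^sub>R (\<Sum>i<m. W i *\<^sub>R (g i (x t) - g i (y t)))"]
        unfolding Heq by linarith
      then show "Nu (t + \<delta>) \<le> Nu t + \<delta> * (\<Lambda> * Nu t + \<beta> t + \<epsilon>)"
        unfolding \<beta>_def by (simp add: algebra_simps)
    qed
  qed
  define c where "c = 2 * K' * (L + L')"
  have NuB: "Nu t \<le> c * ((t - tk) * \<phi> (t - tk))" if "t \<in> I" for t
  proof (rule comparison[of tk tk1 Nu "\<lambda>t. c * ((t - tk) * \<phi> (t - tk))"
        "\<lambda>t. c * (\<phi> (t - tk) + (t - tk) * exp (\<Lambda> * (t - tk)))" \<Lambda> \<beta>])
    show "tk \<le> tk1" using h by simp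
    show "continuous_on {tk..tk1} Nu" using Nuc unfolding I_def .
    show "((\<lambda>t. c * ((t - tk) * \<phi> (t - tk))) has_real_derivative c * (\<phi> (t - tk) + (t - tk) * exp (\<Lambda> * (t - tk)))) (at t within {tk..tk1})" for t
    proof -
      have "((\<lambda>t. (t - tk) * \<phi> (t - tk)) has_real_derivative (1 * \<phi> (t - tk) + (t - tk) * exp (\<Lambda> * (t - tk)))) (at t within {tk..tk1})"
        using \<phi>der[of t] unfolding I_def by (auto intro!: derivative_eq_intros)
      from DERIV_cmult[OF this, of c] show ?thesis by simp
    qed
    show "\<Lambda> * (c * ((t - tk) * \<phi> (t - tk))) + \<beta> t \<le> c * (\<phi> (t - tk) + (t - tk) * exp (\<Lambda> * (t - tk)))"
      if tt: "t \<in> {tk..tk1}" for t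
    proof -
      define s where "s = t - tk"
      have s0: "0 \<le> s" using tt unfolding s_def by auto
      have p0: "0 \<le> \<phi> s" using \<phi>0[OF s0] .
      have e1: "\<Lambda> * (c * (s * \<phi> s)) = c * s * exp (\<Lambda> * s) - c * s"
      proof -
        have "\<Lambda> * (c * (s * \<phi> s)) = c * s * (\<Lambda> * \<phi> s)" by (simp add: algebra_simps)
        also have "\<dots> = c * s * (exp (\<Lambda> * s) - 1)" using \<Lambda>\<phi>[of s] by simp
        finally show ?thesis by (simp add: algebra_simps)
      qed
      have n1: "0 \<le> K' * L * \<phi> s" using K'0 L0 p0 by simp
      have n2: "0 \<le> K' * L' * s" using K'0 L'0 s0 by simp
      have "\<Lambda> * (c * (s * \<phi> s)) + \<beta> t \<le> c * (\<phi> s + s * exp (\<Lambda> * s))"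
        unfolding \<beta>_def s_def[symmetric] e1 unfolding c_def using n1 n2 by (simp add: algebra_simps)
      then show ?thesis unfolding s_def .
    qed
    show "Nu tk \<le> c * ((tk - tk) * \<phi> (tk - tk))" unfolding Nu_def u_def using xt0 y_init by simp
    show "t \<in> {tk..tk1}" using that unfolding I_def .
  qed (use dB in auto)
  have RB: "maxnorm (R tk1) \<le> (K + K') * L' * h^2 / 3"
  proof (rule maxnorm_leI)
    fix j
    define G where "G i s = g i (x s) $ j" for i s
    have Gc: "continuous_on {tk..tk1} (G i)" if "i < m" for i
    proof -
      have "continuous_on I (\<lambda>s. (\<lambda>z. z $ j) (g i (x s)))"
        by (rule linear_continuous_on_compose[OF gxc[OF that] bounded_linear.linear[OF bounded_linear_vec_nth]])
      then show ?thesis unfolding G_def I_def by simp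
    qed
    have Gl: "\<bar>G i s - G i s'\<bar> \<le> (Li i * (K + K')) * \<bar>s - s'\<bar>"
      if i: "i < m" and s: "s \<in> {tk..tk1}" "s' \<in> {tk..tk1}" for i s s'
    proof -
      have "\<bar>G i s - G i s'\<bar> = \<bar>(g i (x s) - g i (x s')) $ j\<bar>" unfolding G_def by simp
      also have "\<dots> \<le> maxnorm (g i (x s) - g i (x s'))" by (rule maxnorm_ge)
      also have "\<dots> \<le> Li i * maxnorm (x s - x s')"
        using s by (intro lip_maxnorm[OF g_C1(1)[OF i] B_convex xB xB Dg_bd[OF i]]) auto
      also have "\<dots> \<le> Li i * ((K + K') * \<bar>s - s'\<bar>)"
        using xlip[of s' s] s Li0[OF i] unfolding I_def by (intro mult_left_mono) auto
      finally show ?thesis by (simp add: mult.assoc)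
    qed
    have termI: "((\<lambda>s. (v i s - W i) * G i s) has_integral integral {tk..tk1} (\<lambda>s. (v i s - W i) * G i s)) {tk..tk1}"
      if i: "i < m" for i
    proof -
      have "(\<lambda>s. v i s * G i s - W i * G i s) integrable_on {tk..tk1}"
        using prod_int[OF vA[OF i] Gc[OF i]] integrable_on_cmult_left[OF integrable_continuous_interval[OF Gc[OF i]], of "W i"]
        by (intro integrable_diff) auto
      then have "(\<lambda>s. (v i s - W i) * G i s) integrable_on {tk..tk1}" by (simp add: algebra_simps)
      then show ?thesis by auto
    qed
    have compI: "((\<lambda>s. \<Sum>i<m. (v i s - W i) * G i s) has_integral R tk1 $ j) {tk..tk1}"
      using has_integral_linear[OF Rint[OF tkI(2)] bounded_linear_vec_nth[of j]]
      unfolding G_def I_def by (simp add: o_def sum_component)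
    have sumI: "((\<lambda>s. \<Sum>i<m. (v i s - W i) * G i s) has_integral (\<Sum>i<m. integral {tk..tk1} (\<lambda>s. (v i s - W i) * G i s))) {tk..tk1}"
      by (rule has_integral_sum) (use termI in auto)
    have Req: "R tk1 $ j = (\<Sum>i<m. integral {tk..tk1} (\<lambda>s. (v i s - W i) * G i s))"
      using has_integral_unique[OF compI sumI] .
    have "\<bar>R tk1 $ j\<bar> \<le> (\<Sum>i<m. \<bar>integral {tk..tk1} (\<lambda>s. (v i s - W i) * G i s)\<bar>)"
      unfolding Req by (rule sum_abs)
    also have "\<dots> \<le> (\<Sum>i<m. V i * (Li i * (K + K')) * h^2 / 3)"
    proof (rule sum_mono)
      fix i assume "i \<in> {..<m}"
      then have i: "i < m" by simp
      show "\<bar>integral {tk..tk1} (\<lambda>s. (v i s - W i) * G i s)\<bar> \<le> V i * (Li i * (K + K')) * h^2 / 3"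
        unfolding W_def h_def
      proof (rule scalar_avg)
        show "tk < tk1" using h .
        show "v i integrable_on {tk..tk1}" using vInt[OF i] .
        show "continuous_on {tk..tk1} (G i)" using Gc[OF i] .
        show "(\<lambda>s. v i s * G i s) integrable_on {tk..tk1}" using prod_int[OF vA[OF i] Gc[OF i]] .
        show "\<bar>v i s\<bar> \<le> V i" for s using v_bd[OF i] .
        show "\<bar>G i s - G i s'\<bar> \<le> Li i * (K + K') * \<bar>s - s'\<bar>" if "s \<in> {tk..tk1}" "s' \<in> {tk..tk1}" for s s'
          using Gl[OF i that] .
        show "0 \<le> Li i * (K + K')" using Li0[OF i] K0 K'0 by simp
      qed
    qed
    also have "\<dots> = (\<Sum>i<m. ((K + K') * h^2 / 3) * (V i * Li i))"
      by (rule sum.cong[OF refl]) (simp add: algebra_simps)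
    also have "\<dots> = (K + K') * L' * h^2 / 3"
      unfolding L'_def sum_distrib_left[symmetric] by (simp add: algebra_simps)
    finally show "\<bar>R tk1 $ j\<bar> \<le> (K + K') * L' * h^2 / 3" .
  qed
  have "x tk1 - y tk1 = u tk1 + R tk1" unfolding u_def R_def by simp
  then have "maxnorm (x tk1 - y tk1) \<le> Nu tk1 + maxnorm (R tk1)"
    unfolding Nu_def using maxnorm_triangle by simp
  also have "\<dots> \<le> c * (h * \<phi> h) + (K + K') * L' * h^2 / 3"
    using NuB[OF tkI(2)] RB unfolding h_def by simp
  also have "\<dots> = h^2 * (((K + K') * L') / 3 + 2 * K' * (L + L') * ((exp (\<Lambda> * h) - 1) / (\<Lambda> * h)))"
    unfolding c_def \<phi>_def using Lam hpos by (simp add: field_simps power2_eq_square)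
  finally show ?thesis unfolding h_def K'_def L'_def .
qed



end
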